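(* Let $N\ge 2$ and consider $N$ agents with double-integrator dynamics subject to constant matched disturbances, $$\dot x_i = y_i,\qquad \dot y_i = u_i + d_i,\qquad x_i,y_i,u_i\in\mathbb{R},\ d_i\in\mathbb{R}\text{ constant},\ i\in\{1,\dots,N\},$$ interconnected through a weighted directed graph with weights $a_{ij}\ge 0$ ($a_{ii}=0$) whose Laplacian $L=[\ell_{ij}]\in\mathbb{R}^{N\times N}$, $\ell_{ii}=\sum_{k\in\mathcal N_i}a_{ik}$, $\ell_{ij}=-a_{ij}$ ($i\ne j$), is such that the graph contains a directed spanning tree. Apply the controller $$u_i = -\gamma_1\sum_{j=1}^{N} a_{ij}(x_i-x_j) - \gamma_2 y_i - \gamma_3\hat\delta_i,\qquad \dot{\hat\delta}_i = \gamma_1\sum_{j=1}^{N} a_{ij}(x_i-x_j) + \gamma_4 y_i,$$ with positive gains $\gamma_1,\gamma_2,\gamma_3,\gamma_4$, and set $\tilde\delta_i=\hat\delta_i-\frac{d_i}{\gamma_3}$, $x=(x_1,\dots,x_N)^\top$, $y=(y_1,\dots,y_N)^\top$, $\tilde\delta=(\tilde\delta_1,\dots,\tilde\delta_N)^\top$, so that the closed loop reads $\dot x=y$, $\dot y=-\gamma_1Lx-\gamma_2y-\gamma_3\tilde\delta$, $\dot{\tilde\delta}=\gamma_1Lx+\gamma_4y$. Define the consensus errors $$e_x=(I_N-\mathbf 1_N v_\ell^\top)x,\quad e_y=(I_N-\mathbf 1_N v_\ell^\top)y,\quad e_d=(I_N-\mathbf 1_N v_\ell^\top)\tilde\delta.$$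 Then the positive gains $\gamma_1,\dots,\gamma_4$ can be chosen such that, for all initial conditions, $(e_x(t),e_y(t),e_d(t))\to 0$ as $t\to\infty$ (equivalently, $x_i-v_\ell^\top x\to0$, $y_i-v_\ell^\top y\to 0$, $\tilde\delta_i-v_\ell^\top\tilde\delta\to0$ for all $i$). Moreover, this convergence is certified by a Lyapunov function $\mathcal H=\mathcal H_s+\mathcal H_d$ with $$\mathcal H_s=\tfrac12\begin{bmatrix}e_x\\ e_y\end{bmatrix}^\top\begin{bmatrix}\rho P&\epsilon P\\ \epsilon P& 2\mu I_N\end{bmatrix}\begin{bmatrix}e_x\\ e_y\end{bmatrix},\qquad \mathcal H_d=\tfrac12 b\begin{bmatrix}e_y\\ e_d\end{bmatrix}^\top\begin{bmatrix}2I_N& I_N\\ I_N& I_N\end{bmatrix}\begin{bmatrix}e_y\\ e_d\end{bmatrix},$$ for some scalars $\rho,\epsilon,\mu,b>0$ and symmetric positive definite $P\in\mathbb{R}^{N\times N}$ with $\sqrt{2\rho\mu/\|P\|}>\epsilon$ (so that $\mathcal H>0$).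
   Context: $\mathcal N_i$ is the set of indices of agents transmitting information to agent $i$; for a directed graph $L$ need not be symmetric. $\mathbf 1_N$ is the all-ones vector in $\mathbb{R}^N$, so $L\mathbf 1_N=0$. Under the spanning-tree assumption $0$ is a simple eigenvalue of $L$; $v_\ell\in\mathbb{R}^N$ denotes a left eigenvector of $L$ for the eigenvalue $0$ ($v_\ell^\top L=0$), normalized so that $v_\ell^\top\mathbf 1_N=1$. The quantities $v_\ell^\top x$, $v_\ell^\top y$, $v_\ell^\top\tilde\delta$ are called mean-field states. *)

theory Defs
  imports "HOL-Analysis.Analysis"
begin

text \<open>Agents are indexed by a finite type 'n (N = CARD('n)).
  Weight a i j is the weight of the edge from agent j to agent i
  (agent j transmits information to agent i iff a i j > 0).\<close>

definition ones :: "real^'n" where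
  "ones = (\<chi> i. 1)"

definition laplacian :: "('n::finite \<Rightarrow> 'n \<Rightarrow> real) \<Rightarrow> real^'n^'n" where
  "laplacian a = (\<chi> i j. if i = j then (\<Sum>k\<in>UNIV. a i k) else - a i j)"

text \<open>Directed edge j \<rightarrow> i iff a i j > 0.\<close>
definition graph_edges :: "('n \<Rightarrow> 'n \<Rightarrow> real) \<Rightarrow> ('n \<times> 'n) set" where
  "graph_edges a = {(j, i). a i j > 0}"

definition has_spanning_tree :: "('n \<Rightarrow> 'n \<Rightarrow> real) \<Rightarrow> bool" where
  "has_spanning_tree a \<longleftrightarrow> (\<exists>r. \<forall>i. (r, i) \<in> (graph_edges a)\<^sup>*)"

text \<open>Consensus error (I - 1 v^T) z.\<close>
definition cons_err :: "real^'n \<Rightarrow> real^'n::finite \<Rightarrow> real^'n" where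
  "cons_err v z = z - (v \<bullet> z) *\<^sub>R ones"

definition sym_pos_def :: "real^'n^'n::finite \<Rightarrow> bool" where
  "sym_pos_def P \<longleftrightarrow> transpose P = P \<and> (\<forall>z. z \<noteq> 0 \<longrightarrow> z \<bullet> (P *v z) > 0)"

definition H_s :: "real \<Rightarrow> real \<Rightarrow> real \<Rightarrow> real^'n^'n::finite \<Rightarrow> real^'n \<Rightarrow> real^'n \<Rightarrow> real" where
  "H_s \<rho> \<epsilon> \<mu> P ex ey =
     (1/2) * (\<rho> * (ex \<bullet> (P *v ex)) + \<epsilon> * (ex \<bullet> (P *v ey)) + \<epsilon> * (ey \<bullet> (P *v ex))
              + 2 * \<mu> * (ey \<bullet> ey))"

definition H_d :: "real \<Rightarrow> real^'n::finite \<Rightarrow> real^'n \<Rightarrow> real" where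
  "H_d b ey ed = (1/2) * b * (2 * (ey \<bullet> ey) + (ey \<bullet> ed) + (ed \<bullet> ey) + (ed \<bullet> ed))"

end

theory Submission
  imports Defs
begin

definition fstep :: "('n::finite \<Rightarrow> 'n \<Rightarrow> real) \<Rightarrow> real \<Rightarrow> real^'n \<Rightarrow> real^'n" where
  "fstep a h z = z - h *\<^sub>R (laplacian a *v z)"

fun reach :: "('n::finite \<Rightarrow> 'n \<Rightarrow> real) \<Rightarrow> 'n \<Rightarrow> nat \<Rightarrow> 'n set" where
  "reach a r 0 = {r}"
| "reach a r (Suc k) = reach a r k \<union> {i. \<exists>j\<in>reach a r k. a i j > 0}"

lemma reach_mono: "k \<le> k' \<Longrightarrow> reach a r k \<subseteq> reach a r k'"
  by (induction k' rule: dec_induct) auto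

lemma reach_of_rtrancl:
  assumes "(r, i) \<in> (graph_edges a)\<^sup>*"
  shows "\<exists>k. i \<in> reach a r k"
  using assms
proof (induction rule: rtrancl_induct)
  case base
  then show ?case by (metis reach.simps(1) singletonI)
next
  case (step j i)
  then obtain k where "j \<in> reach a r k" by blast
  moreover have "a i j > 0" using step(2) by (simp add: graph_edges_def)
  ultimately have "i \<in> reach a r (Suc k)" by auto
  then show ?case by blast
qed

lemma reach_all:
  fixes a :: "'n::finite \<Rightarrow> 'n \<Rightarrow> real"
  assumes "has_spanning_tree a"
  shows "\<exists>r K. \<forall>i. i \<in> reach a r K"
proof -
  obtain r where r: "\<And>i. (r, i) \<in> (graph_edges a)\<^sup>*"
    using assms unfolding has_spanning_tree_def by blast
  have "\<forall>i. \<exists>k. i \<in> reach a r k" using reach_of_rtrancl[OF r] by blast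
  then obtain k where k: "\<And>i. i \<in> reach a r (k i)" by metis
  define K where "K = Max (range k)"
  have "\<And>i. k i \<le> K" unfolding K_def by (simp add: Max_ge)
  then have "\<And>i. i \<in> reach a r K" using k reach_mono by blast
  then show ?thesis by blast
qed

context
  fixes a :: "'n::finite \<Rightarrow> 'n \<Rightarrow> real"
  assumes a_diag: "\<And>i. a i i = 0" and a_nonneg: "\<And>i j. a i j \<ge> 0"
begin

lemma lap_comp:
  shows "(laplacian a *v z) $ i = (\<Sum>j\<in>UNIV. a i j * (z$i - z$j))"
proof -
  have "(laplacian a *v z) $ i = (\<Sum>j\<in>UNIV. (if i = j then (\<Sum>k\<in>UNIV. a i k) else - a i j) * z$j)"
    by (simp add: laplacian_def matrix_vector_mult_def)
  also have "\<dots> = (\<Sum>j\<in>UNIV. (if i = j then (\<Sum>k\<in>UNIV. a i k) * z$j else 0)) - (\<Sum>j\<in>UNIV. a i j * z$j)"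
  proof -
    have "(\<Sum>j\<in>UNIV. (if i = j then (\<Sum>k\<in>UNIV. a i k) else - a i j) * z$j)
       = (\<Sum>j\<in>UNIV. (if i = j then (\<Sum>k\<in>UNIV. a i k) * z$j else 0) - a i j * z$j)"
      by (rule sum.cong) (auto simp: a_diag)
    then show ?thesis by (simp add: sum_subtractf)
  qed
  also have "\<dots> = (\<Sum>k\<in>UNIV. a i k) * z$i - (\<Sum>j\<in>UNIV. a i j * z$j)"
    by simp
  also have "\<dots> = (\<Sum>j\<in>UNIV. a i j * (z$i - z$j))"
    by (simp add: right_diff_distrib sum_subtractf sum_distrib_right)
  finally show ?thesis .
qed

lemma lap_ones: "laplacian a *v ones = 0"
  by (simp add: vec_eq_iff lap_comp ones_def)

lemma fstep_comp:
  shows "(fstep a h z) $ i = z$i - h * (\<Sum>j\<in>UNIV. a i j * (z$i - z$j))"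
  by (simp add: fstep_def lap_comp)

lemma fstep_shift:
  shows "(fstep a h z) $ i - m = (1 - h * (\<Sum>j\<in>UNIV. a i j)) * (z$i - m) + h * (\<Sum>j\<in>UNIV. a i j * (z$j - m))"
proof -
  have S: "(\<Sum>j\<in>UNIV. a i j * (z$i - z$j)) = (\<Sum>j\<in>UNIV. a i j) * (z$i - m) - (\<Sum>j\<in>UNIV. a i j * (z$j - m))"
  proof -
    have "(\<Sum>j\<in>UNIV. a i j * (z$i - z$j)) = (\<Sum>j\<in>UNIV. a i j * (z$i - m) - a i j * (z$j - m))"
      by (rule sum.cong) (auto simp: algebra_simps)
    then show ?thesis by (simp add: sum_subtractf sum_distrib_right)
  qed
  have "\<And>d T (zi::real). zi - h*(d*(zi - m) - T) - m = (1-h*d)*(zi-m) + h*T"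
    by (simp add: algebra_simps)
  then show ?thesis by (simp only: fstep_comp S)
qed

lemma fstep_lower:
  assumes h: "0 < h" "\<And>i. h * (\<Sum>j\<in>UNIV. a i j) \<le> 1/2"
    and low: "\<And>j. m \<le> z$j"
  shows "m \<le> (fstep a h z) $ i"
    and "(fstep a h z) $ i - m \<ge> (1/2) * (z$i - m)"
    and "(fstep a h z) $ i - m \<ge> h * a i j * (z$j - m)"
proof -
  have t1: "(1 - h * (\<Sum>j\<in>UNIV. a i j)) * (z$i - m) \<ge> (1/2) * (z$i - m)"
    using h(2)[of i] low[of i] by (intro mult_right_mono) auto
  have t2: "h * (\<Sum>j\<in>UNIV. a i j * (z$j - m)) \<ge> 0"
    using h(1) a_nonneg low by (intro mult_nonneg_nonneg sum_nonneg) auto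
  have t3: "(\<Sum>j\<in>UNIV. a i j * (z$j - m)) \<ge> a i j * (z$j - m)"
    using a_nonneg low by (intro member_le_sum) auto
  have t4: "(1 - h * (\<Sum>j\<in>UNIV. a i j)) * (z$i - m) \<ge> 0"
    using h(2)[of i] low[of i] by (intro mult_nonneg_nonneg) auto
  have sh: "(fstep a h z) $ i - m = (1 - h * (\<Sum>j\<in>UNIV. a i j)) * (z$i - m) + h * (\<Sum>j\<in>UNIV. a i j * (z$j - m))"
    by (rule fstep_shift)
  show "(fstep a h z) $ i - m \<ge> (1/2) * (z$i - m)"
    using t1 t2 sh by linarith
  show "(fstep a h z) $ i - m \<ge> h * a i j * (z$j - m)"
    using t3 t4 h(1) sh
    by (smt (verit) mult.assoc mult_left_mono)
  then show "m \<le> (fstep a h z) $ i"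
    using h(1) a_nonneg[of i j] low[of j] by (smt (verit) mult_nonneg_nonneg)
qed

lemma fstep_neg: "fstep a h (- z) = - fstep a h z"
  by (simp add: fstep_def vec_eq_iff matrix_vector_mult_def sum_negf)

lemma funpow_neg: "(fstep a h ^^ k) (- z) = - (fstep a h ^^ k) z"
  by (induction k) (auto simp: fstep_neg)

context
  fixes h \<alpha> :: real
  assumes h: "0 < h" "\<And>i. h * (\<Sum>j\<in>UNIV. a i j) \<le> 1/2"
    and \<alpha>: "0 < \<alpha>" "\<alpha> \<le> 1/2" "\<And>i j. a i j > 0 \<Longrightarrow> \<alpha> \<le> h * a i j"
begin

lemma iter_lower:
  assumes low: "\<And>j. m \<le> z$j"
  shows "(\<forall>i. m \<le> (fstep a h ^^ k) z $ i) \<and>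
         (\<forall>i\<in>reach a r k. (fstep a h ^^ k) z $ i - m \<ge> \<alpha>^k * (z$r - m))"
proof (induction k)
  case 0
  then show ?case using low by auto
next
  case (Suc k)
  define w where "w = (fstep a h ^^ k) z"
  have wl: "\<And>j. m \<le> w$j" using Suc w_def by auto
  have wr: "\<And>i. i \<in> reach a r k \<Longrightarrow> w $ i - m \<ge> \<alpha>^k * (z$r - m)" using Suc w_def by auto
  have zr: "z$r - m \<ge> 0" using low[of r] by simp
  have e: "(fstep a h ^^ Suc k) z = fstep a h w" by (simp add: w_def)
  have "\<forall>i. m \<le> fstep a h w $ i" using fstep_lower(1)[OF h wl] by blast
  moreover have "\<forall>i\<in>reach a r (Suc k). fstep a h w $ i - m \<ge> \<alpha>^Suc k * (z$r - m)"
  proof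
    fix i assume "i \<in> reach a r (Suc k)"
    then consider "i \<in> reach a r k" | j where "j \<in> reach a r k" "a i j > 0" by auto
    then show "fstep a h w $ i - m \<ge> \<alpha>^Suc k * (z$r - m)"
    proof cases
      case 1
      have "\<alpha>^Suc k * (z$r - m) = \<alpha> * (\<alpha>^k * (z$r - m))" by simp
      also have "\<dots> \<le> (1/2) * (w$i - m)"
        using wr[OF 1] \<alpha> wl[of i] zr by (intro mult_mono) auto
      also have "\<dots> \<le> fstep a h w $ i - m" using fstep_lower(2)[OF h wl] by blast
      finally show ?thesis .
    next
      case 2
      have "\<alpha>^Suc k * (z$r - m) = \<alpha> * (\<alpha>^k * (z$r - m))" by simp
      also have "\<dots> \<le> (h * a i j) * (w$j - m)"
        using wr[OF 2(1)] \<alpha>(1) \<alpha>(3)[OF 2(2)] wl[of j] zr by (intro mult_mono) auto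
      also have "\<dots> \<le> fstep a h w $ i - m" using fstep_lower(3)[OF h wl] by blast
      finally show ?thesis .
    qed
  qed
  ultimately show ?case unfolding e by blast
qed

lemma K_step:
  assumes K: "\<And>i. i \<in> reach a r K"
    and bnd: "\<And>j. m \<le> z$j \<and> z$j \<le> M"
  shows "m + \<alpha>^K * (z$r - m) \<le> (fstep a h ^^ K) z $ i \<and> (fstep a h ^^ K) z $ i \<le> M - \<alpha>^K * (M - z$r)"
proof
  show "m + \<alpha>^K * (z$r - m) \<le> (fstep a h ^^ K) z $ i"
  proof -
    have "\<And>j. m \<le> z$j" using bnd by blast
    from iter_lower[OF this, of K r] K[of i] show ?thesis by auto
  qed
  have lowneg: "\<And>j. - M \<le> (- z)$j" using bnd by simp
  have "(fstep a h ^^ K) (- z) $ i - (- M) \<ge> \<alpha>^K * ((- z)$r - (- M))"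
    using iter_lower[OF lowneg, of K r] K by blast
  then show "(fstep a h ^^ K) z $ i \<le> M - \<alpha>^K * (M - z$r)"
    by (simp add: funpow_neg)
qed

lemma blocks:
  assumes K: "\<And>i. i \<in> reach a r K"
    and bnd: "\<And>j. m \<le> z$j \<and> z$j \<le> M"
  shows "\<exists>m' M'. (\<forall>i. m' \<le> ((fstep a h ^^ K) ^^ n) z $ i \<and> ((fstep a h ^^ K) ^^ n) z $ i \<le> M')
           \<and> M' - m' = (1 - \<alpha>^K)^n * (M - m)"
proof (induction n)
  case 0
  then show ?case using bnd by (intro exI[of _ m] exI[of _ M]) auto
next
  case (Suc n)
  then obtain m' M' where mM: "\<And>i. m' \<le> ((fstep a h ^^ K) ^^ n) z $ i \<and> ((fstep a h ^^ K) ^^ n) z $ i \<le> M'"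
    and d: "M' - m' = (1 - \<alpha>^K)^n * (M - m)" by blast
  define w where "w = ((fstep a h ^^ K) ^^ n) z"
  have e: "((fstep a h ^^ K) ^^ Suc n) z = (fstep a h ^^ K) w" by (simp add: w_def)
  have "\<And>i. m' + \<alpha>^K * (w$r - m') \<le> (fstep a h ^^ K) w $ i \<and> (fstep a h ^^ K) w $ i \<le> M' - \<alpha>^K * (M' - w$r)"
    using K_step[OF K] mM w_def by blast
  moreover have "(M' - \<alpha>^K * (M' - w$r)) - (m' + \<alpha>^K * (w$r - m')) = (1 - \<alpha>^K)^Suc n * (M - m)"
  proof -
    have "(M' - \<alpha>^K * (M' - w$r)) - (m' + \<alpha>^K * (w$r - m')) = (1 - \<alpha>^K) * (M' - m')"
      by (simp add: algebra_simps)
    then show ?thesis using d by simp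
  qed
  ultimately show ?case unfolding e by blast
qed

end

lemma S_bound:
  fixes v u :: "real^'m::finite"
  assumes vn: "v \<bullet> ones = 1" and vu: "v \<bullet> u = 0" and b: "\<And>j. m \<le> u$j \<and> u$j \<le> M"
  shows "\<bar>u$i\<bar> \<le> (1 + (\<Sum>j\<in>UNIV. \<bar>v$j\<bar>)) * (M - m)"
proof -
  have "0 = (\<Sum>j\<in>UNIV. v$j * u$j)" using vu by (simp add: inner_vec_def)
  also have "\<dots> = (\<Sum>j\<in>UNIV. v$j * (u$j - m)) + m * (\<Sum>j\<in>UNIV. v$j)"
  proof -
    have "(\<Sum>j\<in>UNIV. v$j * u$j) = (\<Sum>j\<in>UNIV. v$j * (u$j - m) + m * v$j)"
      by (rule sum.cong) (auto simp: algebra_simps)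
    then show ?thesis by (simp add: sum.distrib sum_distrib_left)
  qed
  also have "(\<Sum>j\<in>UNIV. v$j) = 1" using vn by (simp add: inner_vec_def ones_def)
  finally have m: "m = - (\<Sum>j\<in>UNIV. v$j * (u$j - m))" by simp
  have "\<bar>\<Sum>j\<in>UNIV. v$j * (u$j - m)\<bar> \<le> (\<Sum>j\<in>UNIV. \<bar>v$j * (u$j - m)\<bar>)"
    by (rule sum_abs)
  also have "\<dots> \<le> (\<Sum>j\<in>UNIV. \<bar>v$j\<bar> * (M - m))"
    using b by (intro sum_mono) (auto simp: abs_mult intro!: mult_left_mono)
  finally have am: "\<bar>m\<bar> \<le> (\<Sum>j\<in>UNIV. \<bar>v$j\<bar>) * (M - m)"
    by (subst m) (simp add: sum_distrib_right)
  show ?thesis using am b[of i] by (simp add: algebra_simps abs_le_iff) linarith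
qed

lemma inner_le_card:
  fixes u :: "real^'m::finite"
  assumes "\<And>i. \<bar>u$i\<bar> \<le> B"
  shows "u \<bullet> u \<le> real CARD('m) * B^2"
proof -
  have "u \<bullet> u = (\<Sum>i\<in>UNIV. (u$i)^2)" by (simp add: inner_vec_def power2_eq_square)
  also have "\<dots> \<le> (\<Sum>i\<in>(UNIV::'m set). B^2)"
    by (rule sum_mono) (metis assms abs_ge_zero power2_abs power_mono)
  finally show ?thesis by simp
qed

lemma v_iter:
  assumes vl: "v v* laplacian a = 0"
  shows "v \<bullet> (fstep a h ^^ k) z = v \<bullet> z"
proof (induction k)
  case (Suc k)
  have "v \<bullet> (laplacian a *v w) = 0" for w using vl by (metis dot_lmul_matrix inner_zero_left)
  then show ?case using Suc by (simp add: fstep_def inner_diff_right)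
qed simp

lemma contract:
  assumes h: "0 < h" "\<And>i. h * (\<Sum>j\<in>UNIV. a i j) \<le> 1/2"
    and \<alpha>: "0 < \<alpha>" "\<alpha> \<le> 1/2" "\<And>i j. a i j > 0 \<Longrightarrow> \<alpha> \<le> h * a i j"
    and K: "\<And>i. i \<in> reach a r K"
    and vl: "v v* laplacian a = 0" and vn: "v \<bullet> ones = 1"
  shows "\<exists>Kt. \<forall>z. v \<bullet> z = 0 \<longrightarrow> (fstep a h ^^ Kt) z \<bullet> (fstep a h ^^ Kt) z \<le> 1/2 * (z \<bullet> z)"
proof -
  define \<eta> where "\<eta> = \<alpha>^K"
  have \<eta>: "0 < \<eta>" "\<eta> \<le> 1" using \<alpha> by (auto simp: \<eta>_def power_le_one)
  define V where "V = (\<Sum>j\<in>UNIV. \<bar>v$j\<bar>)"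
  have V: "V \<ge> 0" unfolding V_def by (simp add: sum_nonneg)
  define C where "C = 4 * real CARD('n) * (1 + V)^2"
  have C: "C > 0" using V by (simp add: C_def)
  obtain n where n: "((1 - \<eta>)^2)^n < 1 / (2 * C)"
  proof -
    have "(1-\<eta>)^2 \<le> 1 - \<eta>" using \<eta> mult_left_le_one_le[of "1-\<eta>" "1-\<eta>"] by (simp add: power2_eq_square)
    then have "(1-\<eta>)^2 < 1" using \<eta> by linarith
    then show ?thesis using real_arch_pow_inv[of "1/(2*C)" "(1-\<eta>)^2"] C that by auto
  qed
  have "\<forall>z. v \<bullet> z = 0 \<longrightarrow> (fstep a h ^^ (K*n)) z \<bullet> (fstep a h ^^ (K*n)) z \<le> 1/2 * (z \<bullet> z)"
  proof (intro allI impI)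
    fix z :: "real^'n" assume vz: "v \<bullet> z = 0"
    have bnd: "\<And>j. - norm z \<le> z$j \<and> z$j \<le> norm z"
      using component_le_norm_cart[of z] by (simp add: abs_le_iff) (smt (verit))
    obtain m' M' where mM: "\<And>i. m' \<le> ((fstep a h ^^ K) ^^ n) z $ i \<and> ((fstep a h ^^ K) ^^ n) z $ i \<le> M'"
      and d: "M' - m' = (1 - \<eta>)^n * (norm z - - norm z)"
      using blocks[OF h \<alpha> K bnd, of n] unfolding \<eta>_def by blast
    define u where "u = (fstep a h ^^ (K*n)) z"
    have uu: "u = ((fstep a h ^^ K) ^^ n) z" by (simp add: u_def funpow_mult)
    have vu: "v \<bullet> u = 0" using v_iter[OF vl] vz by (simp add: u_def)
    have ub: "\<bar>u$i\<bar> \<le> (1 + V) * ((1 - \<eta>)^n * (2 * norm z))" for i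
      using S_bound[OF vn vu, of m' M' i] mM d uu by (simp add: V_def)
    have "u \<bullet> u \<le> real CARD('n) * ((1 + V) * ((1 - \<eta>)^n * (2 * norm z)))^2"
      by (rule inner_le_card[OF ub])
    also have "\<dots> = C * ((1 - \<eta>)^2)^n * (z \<bullet> z)"
    proof -
      have p: "((1-\<eta>)^n)^2 = ((1-\<eta>)^2)^n" by (metis power_mult mult.commute)
      have "((1 + V) * ((1 - \<eta>)^n * (2 * norm z)))^2 = 4 * (1+V)^2 * ((1-\<eta>)^n)^2 * (norm z)^2"
        by (simp add: power_mult_distrib)
      then show ?thesis by (simp add: p C_def power2_norm_eq_inner)
    qed
    also have "\<dots> \<le> C * (1 / (2 * C)) * (z \<bullet> z)"
      using n C by (intro mult_right_mono mult_left_mono) auto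
    also have "\<dots> = 1/2 * (z \<bullet> z)" using C by simp
    finally show "u \<bullet> u \<le> 1/2 * (z \<bullet> z)" .
  qed
  then show ?thesis by blast
qed

lemma fstep_linear: "linear (fstep a h)"
  by (rule linearI) (simp_all add: fstep_def algebra_simps matrix_vector_right_distrib matrix_vector_mult_scaleR)

lemma funpow_linear: "linear (fstep a h ^^ k)"
proof (induction k)
  case 0 show ?case by (simp add: linear_id[unfolded id_def])
next
  case (Suc k) show ?case using linear_compose[OF Suc.IH fstep_linear] by (simp add: o_def)
qed

lemma fstep_zero: "(fstep a h ^^ k) 0 = 0"
  using linear_0[OF funpow_linear] by blast

lemma contract1:
  assumes h: "0 < h" "\<And>i. h * (\<Sum>j\<in>UNIV. a i j) \<le> 1/2"
    and \<alpha>: "0 < \<alpha>" "\<alpha> \<le> 1/2" "\<And>i j. a i j > 0 \<Longrightarrow> \<alpha> \<le> h * a i j"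
    and K: "\<And>i. i \<in> reach a r K"
    and vl: "v v* laplacian a = 0" and vn: "v \<bullet> ones = 1"
  shows "\<exists>Kt>0. \<forall>z. v \<bullet> z = 0 \<longrightarrow> (fstep a h ^^ Kt) z \<bullet> (fstep a h ^^ Kt) z \<le> 1/2 * (z \<bullet> z)"
proof -
  obtain Kt where Kt: "\<forall>z. v \<bullet> z = 0 \<longrightarrow> (fstep a h ^^ Kt) z \<bullet> (fstep a h ^^ Kt) z \<le> 1/2 * (z \<bullet> z)"
    using contract[OF h \<alpha> K vl vn] by blast
  show ?thesis
  proof (cases "Kt = 0")
    case True
    have "\<forall>z. v \<bullet> z = 0 \<longrightarrow> z = 0"
    proof (intro allI impI)
      fix z :: "real^'n" assume "v \<bullet> z = 0"
      then have "z \<bullet> z \<le> 1/2 * (z \<bullet> z)" using Kt True by auto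
      then have "z \<bullet> z \<le> 0" by simp
      then show "z = 0" by (metis inner_ge_zero inner_eq_zero_iff order_antisym)
    qed
    then have "\<forall>z. v \<bullet> z = 0 \<longrightarrow> (fstep a h ^^ 1) z \<bullet> (fstep a h ^^ 1) z \<le> 1/2 * (z \<bullet> z)"
      using fstep_zero[where h=h and k=1] by auto
    then show ?thesis by (intro exI[of _ 1]) auto
  qed (use Kt in blast)
qed

end

definition gram :: "(nat \<Rightarrow> real^'n^'n) \<Rightarrow> nat set \<Rightarrow> real^'n^'n::finite" where
  "gram A I = (\<Sum>k\<in>I. transpose (A k) ** A k)"

lemma sum_mv: "finite I \<Longrightarrow> (\<Sum>k\<in>I. M k) *v w = (\<Sum>k\<in>I. M k *v w)"
  by (induction I rule: finite_induct) (auto simp: matrix_vector_mult_add_rdistrib)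

lemma gram_inner:
  assumes "finite I"
  shows "z \<bullet> (gram A I *v w) = (\<Sum>k\<in>I. (A k *v z) \<bullet> (A k *v w))"
proof -
  have "z \<bullet> ((transpose (A k) ** A k) *v w) = (A k *v z) \<bullet> (A k *v w)" for k
    by (metis dot_lmul_matrix inner_commute matrix_vector_mul_assoc transpose_matrix_vector)
  then show ?thesis by (simp add: gram_def sum_mv[OF assms] inner_sum_right)
qed

lemma gram_sym: "transpose (gram A I) = gram A I"
proof -
  have "transpose (transpose (A k) ** A k) = transpose (A k) ** A k" for k
    by (simp add: matrix_transpose_mul)
  then show ?thesis
    by (simp add: gram_def vec_eq_iff transpose_def sum_component)
qed

lemma cons_err_linear: "linear (cons_err v)"
  by (rule linearI) (simp_all add: cons_err_def algebra_simps inner_add_right)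

lemma ones_inner: "ones \<bullet> (ones :: real^'n::finite) = real CARD('n)"
  by (simp add: ones_def inner_vec_def)

lemma sq_sum_le: "(x + y) \<bullet> (x + y) \<le> 2 * (x \<bullet> x) + 2 * ((y::'a::real_inner) \<bullet> y)"
proof -
  have "0 \<le> (x - y) \<bullet> (x - y)" by simp
  then show ?thesis by (simp add: inner_add_left inner_add_right inner_diff_left inner_diff_right inner_commute)
qed

context
  fixes a :: "'n::finite \<Rightarrow> 'n \<Rightarrow> real"
  assumes a_diag: "\<And>i. a i i = 0" and a_nonneg: "\<And>i j. a i j \<ge> 0"
begin

lemma lyap_exists:
  assumes tree: "has_spanning_tree a" and vl: "v v* laplacian a = 0" and vn: "v \<bullet> ones = 1"
  shows "\<exists>P. transpose P = P \<and> (\<forall>z w. z \<bullet> (P *v w) = w \<bullet> (P *v z))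
     \<and> (\<forall>z. z \<bullet> (P *v z) \<ge> 1/2 * (z \<bullet> z))
     \<and> (\<exists>c>0. \<forall>z. v \<bullet> z = 0 \<longrightarrow> z \<bullet> (P *v (laplacian a *v z)) \<ge> c * (z \<bullet> z))"
proof -
  obtain r K where K: "\<And>i. i \<in> reach a r K" using reach_all[OF tree] by blast
  define D where "D = 1 + (\<Sum>i\<in>UNIV. \<Sum>j\<in>UNIV. a i j)"
  have D: "D \<ge> 1" unfolding D_def using a_nonneg by (simp add: sum_nonneg)
  define h where "h = 1 / (2 * D)"
  have h0: "0 < h" using D by (simp add: h_def)
  have h1: "h * (\<Sum>j\<in>UNIV. a i j) \<le> 1/2" for i
  proof -
    have "(\<Sum>j\<in>UNIV. a i j) \<le> (\<Sum>i\<in>UNIV. \<Sum>j\<in>UNIV. a i j)"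
      using a_nonneg by (intro member_le_sum) (auto simp: sum_nonneg)
    then have "(\<Sum>j\<in>UNIV. a i j) \<le> D" by (simp add: D_def)
    then show ?thesis using D h0 by (simp add: h_def field_simps)
  qed
  define Spos where "Spos = (\<lambda>(i,j). a i j) ` {(i,j). a i j > 0}"
  have finS: "finite (insert 1 Spos)" unfolding Spos_def by simp
  define amin where "amin = Min (insert 1 Spos)"
  have amin0: "amin > 0" unfolding amin_def using finS by (auto simp: Min_gr_iff Spos_def)
  have amin1: "a i j > 0 \<Longrightarrow> amin \<le> a i j" for i j
    unfolding amin_def using finS by (intro Min_le) (auto simp: Spos_def)
  define \<alpha> where "\<alpha> = min (1/2) (h * amin)"
  have \<alpha>0: "0 < \<alpha>" using h0 amin0 by (simp add: \<alpha>_def)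
  have \<alpha>1: "\<alpha> \<le> 1/2" by (simp add: \<alpha>_def)
  have \<alpha>2: "a i j > 0 \<Longrightarrow> \<alpha> \<le> h * a i j" for i j
    using amin1[of i j] h0 by (simp add: \<alpha>_def min_le_iff_disj)
  obtain Kt where Kt0: "Kt > 0"
    and Kt: "\<And>z. v \<bullet> z = 0 \<Longrightarrow> (fstep a h ^^ Kt) z \<bullet> (fstep a h ^^ Kt) z \<le> 1/2 * (z \<bullet> z)"
    using contract1[where a=a, OF a_diag a_nonneg h0 h1 \<alpha>0 \<alpha>1 \<alpha>2 K vl vn] by blast
  define g where "g k z = (fstep a h ^^ k) (cons_err v z)" for k z
  have glin: "linear (g k)" for k
    using linear_compose[OF cons_err_linear funpow_linear[where a=a, OF a_diag a_nonneg]]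
    unfolding g_def[abs_def] by (simp add: o_def)
  have blin: "linear (\<lambda>z. (v \<bullet> z) *\<^sub>R (ones :: real^'n))"
    by (rule linearI) (simp_all add: inner_add_right scaleR_add_left)
  define A where "A k = (if k < Kt then matrix (g k) else matrix (\<lambda>z. (v \<bullet> z) *\<^sub>R (ones :: real^'n)))" for k
  have Ak: "A k *v z = g k z" if "k < Kt" for k z
    using that matrix_vector_mul(2)[OF glin[of k]] by (simp add: A_def)
  have AKt: "A Kt *v z = (v \<bullet> z) *\<^sub>R ones" for z
    using matrix_vector_mul(2)[OF blin] by (simp add: A_def)
  define P where "P = gram A {..<Suc Kt}"
  have Pf: "z \<bullet> (P *v w) = (\<Sum>k<Kt. g k z \<bullet> g k w) + real CARD('n) * ((v \<bullet> z) * (v \<bullet> w))" for z w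
    by (simp add: P_def gram_inner Ak AKt ones_inner)
  have Psym: "z \<bullet> (P *v w) = w \<bullet> (P *v z)" for z w
    by (simp add: Pf inner_commute mult.commute)
  have Pco: "z \<bullet> (P *v z) \<ge> 1/2 * (z \<bullet> z)" for z
  proof -
    have "(\<Sum>k<Kt. g k z \<bullet> g k z) \<ge> g 0 z \<bullet> g 0 z"
      using Kt0 by (intro member_le_sum) auto
    then have q: "z \<bullet> (P *v z) \<ge> cons_err v z \<bullet> cons_err v z + real CARD('n) * ((v \<bullet> z) * (v \<bullet> z))"
      by (simp add: Pf g_def)
    have "z = cons_err v z + (v \<bullet> z) *\<^sub>R ones" by (simp add: cons_err_def)
    then have "z \<bullet> z \<le> 2 * (cons_err v z \<bullet> cons_err v z) + 2 * (((v \<bullet> z) *\<^sub>R ones) \<bullet> ((v \<bullet> z) *\<^sub>R (ones::real^'n)))"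
      by (metis sq_sum_le)
    also have "((v \<bullet> z) *\<^sub>R ones) \<bullet> ((v \<bullet> z) *\<^sub>R (ones::real^'n)) = real CARD('n) * ((v \<bullet> z) * (v \<bullet> z))"
      by (simp add: ones_inner)
    finally show ?thesis using q by linarith
  qed
  have Plap: "z \<bullet> (P *v (laplacian a *v z)) \<ge> 1 / (4 * h) * (z \<bullet> z)" if vz: "v \<bullet> z = 0" for z
  proof -
    define y where "y = laplacian a *v z"
    define F where "F k = (fstep a h ^^ k) z \<bullet> (fstep a h ^^ k) z" for k
    have ce: "cons_err v w = w" if "v \<bullet> w = 0" for w using that by (simp add: cons_err_def)
    have vf: "v \<bullet> fstep a h z = 0" using v_iter[where a=a and h=h and k=1 and z=z, OF a_diag a_nonneg vl] vz by simp
    have Qz: "z \<bullet> (P *v z) = (\<Sum>k<Kt. F k)"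
      by (simp add: Pf g_def ce[OF vz] vz F_def)
    have Qf: "fstep a h z \<bullet> (P *v fstep a h z) = (\<Sum>k<Kt. F (Suc k))"
      by (simp add: Pf g_def ce[OF vf] vf F_def funpow_swap1)
    have tel: "fstep a h z \<bullet> (P *v fstep a h z) - z \<bullet> (P *v z) = F Kt - F 0"
      using sum_lessThan_telescope[of F Kt] by (simp add: Qz Qf sum_subtractf)
    have FK: "F Kt \<le> 1/2 * (z \<bullet> z)" using Kt[OF vz] by (simp add: F_def)
    have F0: "F 0 = z \<bullet> z" by (simp add: F_def)
    have exp: "fstep a h z \<bullet> (P *v fstep a h z) = z \<bullet> (P *v z) - 2 * h * (z \<bullet> (P *v y)) + h^2 * (y \<bullet> (P *v y))"
    proof -
      have e: "fstep a h z = z - h *\<^sub>R y" by (simp add: fstep_def y_def)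
      show ?thesis unfolding e using Psym[of y z]
        by (simp add: matrix_vector_mult_diff_distrib matrix_vector_mult_scaleR inner_diff_left
            inner_diff_right power2_eq_square algebra_simps)
    qed
    have Qy: "y \<bullet> (P *v y) \<ge> 0" using Pco[of y] inner_ge_zero[of y] by linarith
    have "2 * h * (z \<bullet> (P *v y)) \<ge> 1/2 * (z \<bullet> z)"
    proof -
      have "h^2 * (y \<bullet> (P *v y)) \<ge> 0" using Qy by simp
      then show ?thesis using exp tel FK F0 by linarith
    qed
    then show ?thesis using h0 by (simp add: y_def field_simps)
  qed
  show ?thesis
    apply (rule exI[of _ P])
    using gram_sym Psym Pco Plap h0 unfolding P_def
    by (intro conjI) (auto intro!: exI[of _ "1/(4*h)"])
qed

end

lemma H_lower_real:
  fixes e p G X Y Z Pxx Pxy s :: real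
  assumes e: "e > 0" "e * (4*p^2) \<le> 1" and G: "G \<ge> 1"
    and Pxx: "Pxx \<ge> 1/2 * X^2" and Pxy: "\<bar>Pxy\<bar> \<le> p * X * Y" and s: "\<bar>s\<bar> \<le> Y * Z"
  shows "1/2 * (e*G*Pxx + e*Pxy + e*Pxy + 2*1*Y^2) + 1/2*1*(2*Y^2 + s + s + Z^2)
         \<ge> (e*G/8) * X^2 + 1/2 * Y^2 + 1/4 * Z^2"
proof -
  have t1: "e*G*(Pxx - X^2/2) \<ge> 0" using e G Pxx by simp
  have t2: "e*(Pxy + p*X*Y) \<ge> 0" using e Pxy by (simp add: abs_le_iff)
  have t3: "s + Y*Z \<ge> 0" using s by (simp add: abs_le_iff)
  have t4: "X^2*(e/8)*(G - 4*e*p^2) \<ge> 0"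
  proof -
    have "e*(4*p^2) \<le> G" using e G by linarith
    then have "G - 4*e*p^2 \<ge> 0" by (simp add: algebra_simps)
    then show ?thesis using e by simp
  qed
  have eq: "1/2 * (e*G*Pxx + e*Pxy + e*Pxy + 2*1*Y^2) + 1/2*1*(2*Y^2 + s + s + Z^2)
         - ((e*G/8) * X^2 + 1/2 * Y^2 + 1/4 * Z^2)
       = 1/2*(e*G*(Pxx - X^2/2)) + e*(Pxy + p*X*Y) + (s + Y*Z) + (Y - Z/2)^2 + 1/2*(Y - e*p*X)^2
         + X^2*(e/8)*(G - 4*e*p^2)"
    by (simp add: power2_eq_square algebra_simps)
  have "(Y - Z/2)^2 \<ge> 0" "(Y - e*p*X)^2 \<ge> 0" by simp_all
  then show ?thesis using eq t1 t2 t3 t4 by linarith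
qed

lemma H_upper_real:
  fixes e p G X Y Z Pxx Pxy s :: real
  assumes e: "e > 0" "e * p \<le> 1" and G: "G \<ge> 1" and p: "p \<ge> 0"
    and Pxx: "Pxx \<le> p * X^2" and Pxy: "\<bar>Pxy\<bar> \<le> p * X * Y" and s: "\<bar>s\<bar> \<le> Y * Z"
  shows "1/2 * (e*G*Pxx + e*Pxy + e*Pxy + 2*1*Y^2) + 1/2*1*(2*Y^2 + s + s + Z^2)
         \<le> (e*G*p + 3) * (X^2 + Y^2 + Z^2)"
proof -
  have t1: "e*G*(p*X^2 - Pxx) \<ge> 0" using e G Pxx by simp
  have t2: "e*(p*X*Y - Pxy) \<ge> 0" using e Pxy by (simp add: abs_le_iff)
  have t3: "Y*Z - s \<ge> 0" using s by (simp add: abs_le_iff)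
  have t4: "(1 - e*p) * (X^2 + Y^2) \<ge> 0" using e by simp
  have t5: "e*G*p*(X^2 + Y^2 + Z^2) \<ge> e*G*p*X^2" using e G p by (simp add: algebra_simps)
  have eq: "(e*G*p/2 + 1/2) * X^2 + 3 * Y^2 + Z^2 -
     (1/2 * (e*G*Pxx + e*Pxy + e*Pxy + 2*1*Y^2) + 1/2*1*(2*Y^2 + s + s + Z^2))
     = 1/2*(e*G*(p*X^2 - Pxx)) + e*(p*X*Y - Pxy) + (Y*Z - s) + e*p/2*(X - Y)^2 + 1/2*(Y - Z)^2
       + 1/2*(1 - e*p) * (X^2 + Y^2)"
    by (simp add: power2_eq_square field_simps)
  have "(X - Y)^2 \<ge> 0" "(Y - Z)^2 \<ge> 0" by simp_all
  moreover have "e*p/2*(X - Y)^2 \<ge> 0" using e p by simp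
  moreover have "(e*G*p/2 + 1/2) * X^2 + 3 * Y^2 + Z^2 \<le> (e*G*p + 3) * (X^2 + Y^2 + Z^2)"
  proof -
    have "(e*G*p + 3) * (X^2 + Y^2 + Z^2) = e*G*p*(X^2+Y^2+Z^2) + 3*X^2 + 3*Y^2 + 3*Z^2"
      by (simp add: algebra_simps)
    moreover have "e*G*p*X^2 \<ge> 0" "X^2 \<ge> 0" "Z^2 \<ge> 0" "Y^2 \<ge> 0" using e G p by simp_all
    moreover have "(e*G*p/2 + 1/2) * X^2 = (e*G*p*X^2)/2 + X^2/2" by (simp add: algebra_simps)
    ultimately show ?thesis using t5 by linarith
  qed
  ultimately show ?thesis using eq t1 t2 t3 t4 by linarith
qed

lemma D_real:
  fixes e p c l G X Y Z Pyy Lx Pxd u1 u2 :: real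
  assumes e: "e > 0" "e * (4*p^2) \<le> c" and c: "c > 0" and lp: "l > 0" and p: "p > 0"
    and G: "G = e*p + 9*l^2/(e*c) + 17"
    and X: "X \<ge> 0"
    and Pyy: "Pyy \<le> p * Y^2" and Lx: "Lx \<ge> c * X^2" and Pxd: "\<bar>Pxd\<bar> \<le> p * X * Z"
    and u1: "\<bar>u1\<bar> \<le> l * X * Y" and u2: "\<bar>u2\<bar> \<le> Y * Z"
  shows "e*Pyy - e*Lx - e*Pxd - 3*u1 - 3*G*Y^2 - 4*u2 - Z^2 \<le> - (e*c/2) * X^2 - Y^2 - 1/2 * Z^2"
proof -
  define q where "q = 9*l^2/(e*c)"
  have q: "q * (e*c) = 9*l^2" using e c by (simp add: q_def)
  define r where "r = e*p^2/c"
  have r: "r * c = e*p^2" using c by (simp add: r_def)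
  have r4: "r \<le> 1/4" using e c by (simp add: r_def field_simps)
  have Q1: "(e*c/4)*X^2 - 3*l*X*Y + q*Y^2 \<ge> 0"
  proof -
    have "(e*c) * ((e*c/4)*X^2 - 3*l*X*Y + q*Y^2) = (e*c*X/2 - 3*l*Y)^2"
      using q by (simp add: power2_eq_square algebra_simps)
    then have "(e*c) * ((e*c/4)*X^2 - 3*l*X*Y + q*Y^2) \<ge> 0" by simp
    moreover have "e*c > 0" using e c by simp
    ultimately show ?thesis by (simp add: zero_le_mult_iff)
  qed
  have Q2: "(e*c/4)*X^2 - e*p*X*Z + r*Z^2 \<ge> 0"
  proof -
    have "c * ((e*c/4)*X^2 - e*p*X*Z + r*Z^2) = e*(c*X/2 - p*Z)^2"
      using r by (simp add: power2_eq_square algebra_simps)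
    moreover have "e*(c*X/2 - p*Z)^2 \<ge> 0" using e by simp
    ultimately have "c * ((e*c/4)*X^2 - e*p*X*Z + r*Z^2) \<ge> 0" by simp
    then show ?thesis using c by (simp add: zero_le_mult_iff)
  qed
  have Q3: "(4*Y - Z/2)^2 \<ge> 0" by simp
  have t1: "e*(p*Y^2 - Pyy) \<ge> 0" using e Pyy by simp
  have t2: "e*(Lx - c*X^2) \<ge> 0" using e Lx by simp
  have t3: "e*(Pxd + p*X*Z) \<ge> 0" using e Pxd by (simp add: abs_le_iff)
  have t4: "u1 + l*X*Y \<ge> 0" using u1 by (simp add: abs_le_iff)
  have t5: "u2 + Y*Z \<ge> 0" using u2 by (simp add: abs_le_iff)
  have t6: "(1/4 - r) * Z^2 \<ge> 0" using r4 by simp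
  have t7: "2*G*Y^2 \<ge> 0" using G e c p by (simp add: q_def[symmetric]) (smt (verit) q_def divide_nonneg_pos mult_pos_pos zero_le_power2 mult_nonneg_nonneg)
  have Gq: "G = e*p + q + 17" using G q_def by simp
  have eq: "(- (e*c/2) * X^2 - Y^2 - 1/2 * Z^2) - (e*Pyy - e*Lx - e*Pxd - 3*u1 - 3*G*Y^2 - 4*u2 - Z^2)
     = ((e*c/4)*X^2 - 3*l*X*Y + q*Y^2) + ((e*c/4)*X^2 - e*p*X*Z + r*Z^2) + (4*Y - Z/2)^2
       + e*(p*Y^2 - Pyy) + e*(Lx - c*X^2) + e*(Pxd + p*X*Z) + 3*(u1 + l*X*Y) + 4*(u2 + Y*Z)
       + (1/4 - r) * Z^2 + 2*G*Y^2"
    unfolding Gq by (simp add: power2_eq_square algebra_simps)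
  have "0 \<le> ((e*c/4)*X^2 - 3*l*X*Y + q*Y^2) + ((e*c/4)*X^2 - e*p*X*Z + r*Z^2) + (4*Y - Z/2)^2
       + e*(p*Y^2 - Pyy) + e*(Lx - c*X^2) + e*(Pxd + p*X*Z) + 3*(u1 + l*X*Y) + 4*(u2 + Y*Z)
       + (1/4 - r) * Z^2 + 2*G*Y^2"
  proof -
    have "\<And>a1 a2 a3 a4 a5 a6 a7 a8 a9 (a10::real). 0 \<le> a1 \<Longrightarrow> 0 \<le> a2 \<Longrightarrow> 0 \<le> a3 \<Longrightarrow> 0 \<le> a4 \<Longrightarrow> 0 \<le> a5
      \<Longrightarrow> 0 \<le> a6 \<Longrightarrow> 0 \<le> a7 \<Longrightarrow> 0 \<le> a8 \<Longrightarrow> 0 \<le> a9 \<Longrightarrow> 0 \<le> a10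
      \<Longrightarrow> 0 \<le> a1 + a2 + a3 + a4 + a5 + a6 + 3*a7 + 4*a8 + a9 + a10" by simp
    from this[OF Q1 Q2 Q3 t1 t2 t3 t4 t5 t6 t7] show ?thesis .
  qed
  then have "0 \<le> (- (e*c/2) * X^2 - Y^2 - 1/2 * Z^2) - (e*Pyy - e*Lx - e*Pxd - 3*u1 - 3*G*Y^2 - 4*u2 - Z^2)"
    by (simp only: eq)
  then show ?thesis by simp
qed

lemma exp_decay_tendsto: assumes "(k::real) > 0" shows "((\<lambda>t. exp (-(k*t))) \<longlongrightarrow> 0) at_top"
proof -
  have "filterlim (\<lambda>t. k*t) at_top at_top"
    using filterlim_tendsto_pos_mult_at_top[OF tendsto_const assms filterlim_ident] .
  then have "filterlim (\<lambda>t. exp (k*t)) at_top at_top"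
    using filterlim_compose[OF exp_at_top] by blast
  then have "((\<lambda>t. inverse (exp (k*t))) \<longlongrightarrow> 0) at_top"
    using tendsto_inverse_0_at_top by blast
  then show ?thesis by (simp add: exp_minus)
qed

lemma nonpos_deriv_decr:
  fixes f :: "real \<Rightarrow> real"
  assumes d: "\<And>t. t \<ge> 0 \<Longrightarrow> (f has_real_derivative f' t) (at t within {0..})"
    and n: "\<And>t. t \<ge> 0 \<Longrightarrow> f' t \<le> 0" and t: "0 \<le> t1" "t1 \<le> t2"
  shows "f t2 \<le> f t1"
proof (rule DERIV_nonpos_imp_decreasing_open[OF t(2)])
  fix x assume x: "t1 < x" "x < t2"
  then have "x \<in> {0<..}" using t by auto
  then have "at x within {0..} = at x" by (intro at_within_open_subset[of x "{0<..}"]) auto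
  then show "\<exists>y. (f has_real_derivative y) (at x) \<and> y \<le> 0"
    using d[of x] n[of x] x t by auto
next
  have "continuous_on {0..} f" by (rule DERIV_continuous_on) (use d in auto)
  then show "continuous_on {t1..t2} f" by (rule continuous_on_subset) (use t in auto)
qed

lemma decay:
  fixes H D :: "real \<Rightarrow> real"
  assumes d: "\<And>t. t \<ge> 0 \<Longrightarrow> (H has_real_derivative D t) (at t within {0..})"
    and le: "\<And>t. t \<ge> 0 \<Longrightarrow> D t \<le> - k * H t" and k: "k > 0" and pos: "\<And>t. t \<ge> 0 \<Longrightarrow> H t \<ge> 0"
  shows "\<forall>t1 t2. 0 \<le> t1 \<and> t1 \<le> t2 \<longrightarrow> H t2 \<le> H t1"
    and "\<And>t. t \<ge> 0 \<Longrightarrow> H t \<le> H 0 * exp (-(k*t))"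
proof -
  show "\<forall>t1 t2. 0 \<le> t1 \<and> t1 \<le> t2 \<longrightarrow> H t2 \<le> H t1"
  proof (intro allI impI)
    fix t1 t2 :: real assume "0 \<le> t1 \<and> t1 \<le> t2"
    moreover have "D t \<le> 0" if "t \<ge> 0" for t
    proof -
      have "k * H t \<ge> 0" using pos[OF that] k by simp
      then show ?thesis using le[OF that] by linarith
    qed
    ultimately show "H t2 \<le> H t1" using nonpos_deriv_decr[OF d] by blast
  qed
  fix t :: real assume t: "t \<ge> 0"
  define g where "g u = exp (k*u) * H u" for u
  have gd: "(g has_real_derivative (exp (k*u) * k * H u + exp (k*u) * D u)) (at u within {0..})" if "u \<ge> 0" for u
    unfolding g_def
    by (rule derivative_eq_intros d[OF that] refl | simp)+
  have gn: "exp (k*u) * k * H u + exp (k*u) * D u \<le> 0" if "u \<ge> 0" for u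
  proof -
    have "exp (k*u) * (k * H u + D u) \<le> 0"
      using le[OF that] by (intro mult_nonneg_nonpos) auto
    then show ?thesis by (simp add: algebra_simps)
  qed
  have "g t \<le> g 0" using nonpos_deriv_decr[OF gd gn, of 0 t] t by simp
  then have "exp (k*t) * H t \<le> H 0" by (simp add: g_def)
  then have "H t \<le> H 0 / exp (k*t)" by (simp add: field_simps)
  then show "H t \<le> H 0 * exp (-(k*t))" by (simp add: exp_minus field_simps)
qed

lemma inner_deriv:
  fixes f g :: "real \<Rightarrow> 'a::real_inner"
  assumes "(f has_vector_derivative f') (at t within S)" "(g has_vector_derivative g') (at t within S)"
  shows "((\<lambda>s. f s \<bullet> g s) has_real_derivative (f t \<bullet> g' + f' \<bullet> g t)) (at t within S)"
  using bounded_bilinear.has_vector_derivative[OF bounded_bilinear_inner assms]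
  by (simp add: has_real_derivative_iff_has_vector_derivative)

lemma inner_P_deriv:
  fixes f g :: "real \<Rightarrow> real^'n::finite" and P :: "real^'n^'n"
  assumes "(f has_vector_derivative f') (at t within S)" "(g has_vector_derivative g') (at t within S)"
  shows "((\<lambda>s. f s \<bullet> (P *v g s)) has_real_derivative (f t \<bullet> (P *v g') + f' \<bullet> (P *v g t))) (at t within S)"
proof -
  have "((\<lambda>s. P *v g s) has_vector_derivative P *v g') (at t within S)"
    by (rule bounded_linear.has_vector_derivative[OF matrix_vector_mul_bounded_linear assms(2)])
  from inner_deriv[OF assms(1) this] show ?thesis .
qed

lemma mat_bound:
  fixes M :: "real^'n^'n::finite"
  shows "\<bar>z \<bullet> (M *v w)\<bar> \<le> onorm ((*v) M) * norm z * norm w"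
proof -
  have "\<bar>z \<bullet> (M *v w)\<bar> \<le> norm z * norm (M *v w)" by (rule Cauchy_Schwarz_ineq2)
  also have "\<dots> \<le> norm z * (onorm ((*v) M) * norm w)"
    by (intro mult_left_mono onorm) auto
  finally show ?thesis by (simp add: algebra_simps)
qed

lemma mv_neg: "(P::real^'n^'n::finite) *v (- x) = - (P *v x)"
  by (simp add: vec_eq_iff matrix_vector_mult_def sum_negf)

lemma conv_from:
  fixes f :: "real \<Rightarrow> 'a::real_normed_vector"
  assumes b: "\<And>t. t \<ge> 0 \<Longrightarrow> C * (norm (f t))^2 \<le> H0 * exp (-(k*t))" and C: "C > 0" and k: "k > 0"
  shows "(f \<longlongrightarrow> 0) at_top"
proof (rule Lim_null_comparison)
  show "\<forall>\<^sub>F t in at_top. norm (f t) \<le> sqrt (H0 / C * exp (-(k*t)))"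
    using eventually_ge_at_top[of "0::real"]
  proof (rule eventually_mono)
    fix t :: real assume "t \<ge> 0"
    then have "C * (norm (f t))^2 \<le> H0 * exp (-(k*t))" using b by blast
    then have "(norm (f t))^2 \<le> H0 / C * exp (-(k*t))" using C by (simp add: field_simps)
    then have "sqrt ((norm (f t))^2) \<le> sqrt (H0 / C * exp (-(k*t)))" by (rule real_sqrt_le_mono)
    then show "norm (f t) \<le> sqrt (H0 / C * exp (-(k*t)))" by simp
  qed
  have "((\<lambda>t. H0 / C * exp (-(k*t))) \<longlongrightarrow> H0 / C * 0) at_top"
    by (intro tendsto_mult tendsto_const exp_decay_tendsto k)
  then have "((\<lambda>t. sqrt (H0 / C * exp (-(k*t)))) \<longlongrightarrow> sqrt (H0 / C * 0)) at_top"
    by (rule tendsto_real_sqrt)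
  then show "((\<lambda>t. sqrt (H0 / C * exp (-(k*t)))) \<longlongrightarrow> 0) at_top" by simp
qed

lemma H_lower_vec:
  fixes P :: "real^'n^'n::finite"
  assumes Psym: "\<And>z w. z \<bullet> (P *v w) = w \<bullet> (P *v z)"
    and Pco: "\<And>z. z \<bullet> (P *v z) \<ge> 1/2 * (z \<bullet> z)"
    and p: "p = onorm ((*v) P)" and e: "e > 0" "e * (4*p^2) \<le> 1" and G: "G \<ge> 1"
  shows "H_s (e*G) e 1 P x y + H_d 1 y z \<ge> (e*G/8)*(x \<bullet> x) + 1/2*(y \<bullet> y) + 1/4*(z \<bullet> z)"
proof -
  have eq: "H_s (e*G) e 1 P x y + H_d 1 y z = 1/2 * (e*G*(x \<bullet> (P *v x)) + e*(x \<bullet> (P *v y)) + e*(x \<bullet> (P *v y)) + 2*1*(norm y)^2)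
      + 1/2*1*(2*(norm y)^2 + (y \<bullet> z) + (y \<bullet> z) + (norm z)^2)"
    by (simp add: H_s_def H_d_def Psym[of y x] inner_commute[of z y] power2_norm_eq_inner)
  have "1/2 * (e*G*(x \<bullet> (P *v x)) + e*(x \<bullet> (P *v y)) + e*(x \<bullet> (P *v y)) + 2*1*(norm y)^2)
      + 1/2*1*(2*(norm y)^2 + (y \<bullet> z) + (y \<bullet> z) + (norm z)^2) \<ge> (e*G/8)*(norm x)^2 + 1/2*(norm y)^2 + 1/4*(norm z)^2"
    by (rule H_lower_real[OF e G]) (use Pco[of x] mat_bound[of x P y] Cauchy_Schwarz_ineq2[of y z] p in \<open>auto simp: power2_norm_eq_inner\<close>)
  then show ?thesis unfolding eq by (simp add: power2_norm_eq_inner)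
qed

lemma H_upper_vec:
  fixes P :: "real^'n^'n::finite"
  assumes Psym: "\<And>z w. z \<bullet> (P *v w) = w \<bullet> (P *v z)"
    and p: "p = onorm ((*v) P)" and e: "e > 0" "e * p \<le> 1" and G: "G \<ge> 1"
  shows "H_s (e*G) e 1 P x y + H_d 1 y z \<le> (e*G*p + 3) * (x \<bullet> x + y \<bullet> y + z \<bullet> z)"
proof -
  have p0: "p \<ge> 0" unfolding p by (rule onorm_pos_le) simp
  have eq: "H_s (e*G) e 1 P x y + H_d 1 y z = 1/2 * (e*G*(x \<bullet> (P *v x)) + e*(x \<bullet> (P *v y)) + e*(x \<bullet> (P *v y)) + 2*1*(norm y)^2)
      + 1/2*1*(2*(norm y)^2 + (y \<bullet> z) + (y \<bullet> z) + (norm z)^2)"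
    by (simp add: H_s_def H_d_def Psym[of y x] inner_commute[of z y] power2_norm_eq_inner)
  have Pxx: "x \<bullet> (P *v x) \<le> p * (norm x)^2"
    using mat_bound[of x P x] p by (simp add: power2_eq_square abs_le_iff algebra_simps)
  have "1/2 * (e*G*(x \<bullet> (P *v x)) + e*(x \<bullet> (P *v y)) + e*(x \<bullet> (P *v y)) + 2*1*(norm y)^2)
      + 1/2*1*(2*(norm y)^2 + (y \<bullet> z) + (y \<bullet> z) + (norm z)^2) \<le> (e*G*p + 3) * ((norm x)^2 + (norm y)^2 + (norm z)^2)"
    by (rule H_upper_real[OF e G p0 Pxx]) (use mat_bound[of x P y] Cauchy_Schwarz_ineq2[of y z] p in auto)
  then show ?thesis unfolding eq by (simp add: power2_norm_eq_inner)
qed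

lemma ode_main:
  fixes ex ey ed :: "real \<Rightarrow> real^'n::finite" and P Lm :: "real^'n^'n" and v :: "real^'n"
  assumes Psym: "\<And>z w. z \<bullet> (P *v w) = w \<bullet> (P *v z)"
    and Pco: "\<And>z. z \<bullet> (P *v z) \<ge> 1/2 * (z \<bullet> z)"
    and c: "c > 0" and Plap: "\<And>z. v \<bullet> z = 0 \<Longrightarrow> z \<bullet> (P *v (Lm *v z)) \<ge> c * (z \<bullet> z)"
    and p: "p = onorm ((*v) P)" "p > 0"
    and l: "l = onorm ((*v) Lm) + 1"
    and e: "e > 0" "e * (4*p^2) \<le> c" "e * (4*p^2) \<le> 1" "e * p \<le> 1"
    and G: "G = e*p + 9*l^2/(e*c) + 17"
    and der: "\<And>t. t \<ge> 0 \<Longrightarrow> (ex has_vector_derivative ey t) (at t within {0..}) \<and>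
        (ey has_vector_derivative (- (Lm *v ex t) - G *\<^sub>R ey t - ed t)) (at t within {0..}) \<and>
        (ed has_vector_derivative (Lm *v ex t + G *\<^sub>R ey t)) (at t within {0..})"
    and S: "\<And>t. t \<ge> 0 \<Longrightarrow> v \<bullet> ex t = 0"
  shows "(ex \<longlongrightarrow> 0) at_top \<and> (ey \<longlongrightarrow> 0) at_top \<and> (ed \<longlongrightarrow> 0) at_top \<and>
    (\<forall>t1 t2. 0 \<le> t1 \<and> t1 \<le> t2 \<longrightarrow>
        H_s (e*G) e 1 P (ex t2) (ey t2) + H_d 1 (ey t2) (ed t2)
        \<le> H_s (e*G) e 1 P (ex t1) (ey t1) + H_d 1 (ey t1) (ed t1))"
proof -
  define H where "H t = H_s (e*G) e 1 P (ex t) (ey t) + H_d 1 (ey t) (ed t)" for t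
  have l0: "l > 0" unfolding l using onorm_pos_le[OF matrix_vector_mul_bounded_linear[of Lm]] by linarith
  have G1: "G \<ge> 1" unfolding G using e c l0 p by (simp add: add_nonneg_nonneg mult_nonneg_nonneg)
  define DH where "DH t = e*(ey t \<bullet> (P *v ey t)) - e*(ex t \<bullet> (P *v (Lm *v ex t))) - e*(ex t \<bullet> (P *v ed t))
      - 3*(ey t \<bullet> (Lm *v ex t)) - 3*G*(ey t \<bullet> ey t) - 4*(ey t \<bullet> ed t) - ed t \<bullet> ed t" for t
  have Hder: "(H has_real_derivative DH t) (at t within {0..})" if t: "t \<ge> 0" for t
  proof -
    note d = der[OF t]
    have "(H has_real_derivative
       1/2 * (e*G*(ex t \<bullet> (P *v ey t) + ey t \<bullet> (P *v ex t))
            + e*(ex t \<bullet> (P *v (- (Lm *v ex t) - G *\<^sub>R ey t - ed t)) + ey t \<bullet> (P *v ey t))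
            + e*(ey t \<bullet> (P *v ey t) + (- (Lm *v ex t) - G *\<^sub>R ey t - ed t) \<bullet> (P *v ex t))
            + 2*1*(ey t \<bullet> (- (Lm *v ex t) - G *\<^sub>R ey t - ed t) + (- (Lm *v ex t) - G *\<^sub>R ey t - ed t) \<bullet> ey t))
       + 1/2*1*(2*(ey t \<bullet> (- (Lm *v ex t) - G *\<^sub>R ey t - ed t) + (- (Lm *v ex t) - G *\<^sub>R ey t - ed t) \<bullet> ey t)
            + (ey t \<bullet> (Lm *v ex t + G *\<^sub>R ey t) + (- (Lm *v ex t) - G *\<^sub>R ey t - ed t) \<bullet> ed t)
            + (ed t \<bullet> (- (Lm *v ex t) - G *\<^sub>R ey t - ed t) + (Lm *v ex t + G *\<^sub>R ey t) \<bullet> ey t)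
            + (ed t \<bullet> (Lm *v ex t + G *\<^sub>R ey t) + (Lm *v ex t + G *\<^sub>R ey t) \<bullet> ed t)))
       (at t within {0..})"
      unfolding H_def[abs_def] H_s_def H_d_def
      by (intro DERIV_add DERIV_cmult inner_P_deriv inner_deriv conjunct1[OF d] conjunct1[OF conjunct2[OF d]] conjunct2[OF conjunct2[OF d]])
    moreover have "1/2 * (e*G*(ex t \<bullet> (P *v ey t) + ey t \<bullet> (P *v ex t))
            + e*(ex t \<bullet> (P *v (- (Lm *v ex t) - G *\<^sub>R ey t - ed t)) + ey t \<bullet> (P *v ey t))
            + e*(ey t \<bullet> (P *v ey t) + (- (Lm *v ex t) - G *\<^sub>R ey t - ed t) \<bullet> (P *v ex t))
            + 2*1*(ey t \<bullet> (- (Lm *v ex t) - G *\<^sub>R ey t - ed t) + (- (Lm *v ex t) - G *\<^sub>R ey t - ed t) \<bullet> ey t))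
       + 1/2*1*(2*(ey t \<bullet> (- (Lm *v ex t) - G *\<^sub>R ey t - ed t) + (- (Lm *v ex t) - G *\<^sub>R ey t - ed t) \<bullet> ey t)
            + (ey t \<bullet> (Lm *v ex t + G *\<^sub>R ey t) + (- (Lm *v ex t) - G *\<^sub>R ey t - ed t) \<bullet> ed t)
            + (ed t \<bullet> (- (Lm *v ex t) - G *\<^sub>R ey t - ed t) + (Lm *v ex t + G *\<^sub>R ey t) \<bullet> ey t)
            + (ed t \<bullet> (Lm *v ex t + G *\<^sub>R ey t) + (Lm *v ex t + G *\<^sub>R ey t) \<bullet> ed t)) = DH t"
      unfolding DH_def
      by (simp add: inner_add_left inner_add_right inner_diff_left inner_diff_right
          matrix_vector_right_distrib matrix_vector_mult_diff_distrib matrix_vector_mult_scaleR mv_neg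
          Psym[of "ey t" "ex t"] Psym[of "Lm *v ex t" "ex t"] Psym[of "ed t" "ex t"]
          inner_commute[of "Lm *v ex t" "ey t"] inner_commute[of "ed t" "ey t"]
          inner_commute[of "Lm *v ex t" "ed t"] algebra_simps)
    ultimately show ?thesis by simp
  qed
  have Hlow: "H t \<ge> (e*G/8)*(ex t \<bullet> ex t) + 1/2*(ey t \<bullet> ey t) + 1/4*(ed t \<bullet> ed t)" for t
    unfolding H_def by (rule H_lower_vec[OF Psym Pco p(1) e(1) e(3) G1])
  have Hup: "H t \<le> (e*G*p + 3) * (ex t \<bullet> ex t + ey t \<bullet> ey t + ed t \<bullet> ed t)" for t
    unfolding H_def by (rule H_upper_vec[OF Psym p(1) e(1) e(4) G1])
  have Hpos: "H t \<ge> 0" for t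
  proof -
    have "(e*G/8)*(ex t \<bullet> ex t) \<ge> 0" using e G1 by simp
    moreover have "1/2*(ey t \<bullet> ey t) \<ge> 0" "1/4*(ed t \<bullet> ed t) \<ge> 0" by simp_all
    ultimately show ?thesis using Hlow[of t] by linarith
  qed
  define m2 where "m2 = min (e*c/2) (1/2)"
  define M where "M = e*G*p + 3"
  have m2: "m2 > 0" using e c by (simp add: m2_def)
  have M: "M > 0" using e G1 p by (simp add: M_def add_pos_nonneg)
  have Dle: "DH t \<le> - (m2 / M) * H t" if t: "t \<ge> 0" for t
  proof -
    define X where "X = norm (ex t)"
    define Y where "Y = norm (ey t)"
    define Z where "Z = norm (ed t)"
    have sq: "ex t \<bullet> ex t = X^2" "ey t \<bullet> ey t = Y^2" "ed t \<bullet> ed t = Z^2"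
      by (simp_all add: X_def Y_def Z_def power2_norm_eq_inner)
    have b1: "ey t \<bullet> (P *v ey t) \<le> p * Y^2"
      using mat_bound[of "ey t" P "ey t"] p by (simp add: Y_def power2_eq_square abs_le_iff algebra_simps)
    have b2: "ex t \<bullet> (P *v (Lm *v ex t)) \<ge> c * X^2" using Plap[OF S[OF t]] sq by simp
    have b3: "\<bar>ex t \<bullet> (P *v ed t)\<bar> \<le> p * X * Z" using mat_bound[of "ex t" P "ed t"] p by (simp add: X_def Z_def)
    have b4: "\<bar>ey t \<bullet> (Lm *v ex t)\<bar> \<le> l * X * Y"
    proof -
      have "\<bar>ey t \<bullet> (Lm *v ex t)\<bar> \<le> onorm ((*v) Lm) * Y * X" using mat_bound[of "ey t" Lm "ex t"] by (simp add: X_def Y_def)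
      also have "\<dots> \<le> l * Y * X" unfolding l by (intro mult_right_mono) (auto simp: X_def Y_def)
      finally show ?thesis by (simp add: algebra_simps)
    qed
    have b5: "\<bar>ey t \<bullet> ed t\<bar> \<le> Y * Z" using Cauchy_Schwarz_ineq2[of "ey t" "ed t"] by (simp add: Y_def Z_def)
    have "DH t \<le> - (e*c/2) * X^2 - Y^2 - 1/2 * Z^2"
      unfolding DH_def sq(2) sq(3)
      by (rule D_real[OF e(1) e(2) c l0 p(2) G _ b1 b2 b3 b4 b5]) (simp add: X_def)
    also have "\<dots> \<le> - m2 * (X^2 + Y^2 + Z^2)"
    proof -
      have "m2 * X^2 \<le> (e*c/2) * X^2" "m2 * Y^2 \<le> 1 * Y^2" "m2 * Z^2 \<le> 1/2 * Z^2"
        by (intro mult_right_mono; simp add: m2_def)+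
      then show ?thesis by (simp add: algebra_simps)
    qed
    also have "\<dots> \<le> - (m2 / M) * H t"
    proof -
      have "H t \<le> M * (X^2 + Y^2 + Z^2)" using Hup[of t] sq by (simp add: M_def)
      then have "H t / M \<le> X^2 + Y^2 + Z^2" using M by (simp add: field_simps)
      then have "m2 * (H t / M) \<le> m2 * (X^2 + Y^2 + Z^2)" using m2 by (intro mult_left_mono) auto
      then show ?thesis by (simp add: algebra_simps)
    qed
    finally show ?thesis .
  qed
  have k: "m2 / M > 0" using m2 M by simp
  note dec = decay[of H DH, OF Hder Dle k Hpos]
  have conv: "(f \<longlongrightarrow> 0) at_top" if "\<And>t. C * (f t \<bullet> f t) \<le> H t" "C > 0" for f :: "real \<Rightarrow> real^'n" and C
  proof (rule conv_from[OF _ that(2) k])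
    fix t :: real assume "t \<ge> 0"
    then show "C * (norm (f t))^2 \<le> H 0 * exp (-((m2/M)*t))"
      using dec(2)[of t] that(1)[of t] by (simp add: power2_norm_eq_inner)
  qed
  have "(ex \<longlongrightarrow> 0) at_top"
  proof (rule conv)
    fix t show "(e*G/8) * (ex t \<bullet> ex t) \<le> H t"
      using Hlow[of t] inner_ge_zero[of "ey t"] inner_ge_zero[of "ed t"] by linarith
  qed (use e G1 in simp)
  moreover have "(ey \<longlongrightarrow> 0) at_top"
  proof (rule conv)
    fix t show "1/2 * (ey t \<bullet> ey t) \<le> H t"
    proof -
      have "(e*G/8)*(ex t \<bullet> ex t) \<ge> 0" using e G1 by simp
      moreover have "1/4*(ed t \<bullet> ed t) \<ge> 0" by simp_all
      ultimately show ?thesis using Hlow[of t] by linarith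
    qed
  qed simp
  moreover have "(ed \<longlongrightarrow> 0) at_top"
  proof (rule conv)
    fix t show "1/4 * (ed t \<bullet> ed t) \<le> H t"
    proof -
      have "(e*G/8)*(ex t \<bullet> ex t) \<ge> 0" using e G1 by simp
      moreover have "1/2*(ey t \<bullet> ey t) \<ge> 0" by simp_all
      ultimately show ?thesis using Hlow[of t] by linarith
    qed
  qed simp
  ultimately show ?thesis using dec(1) unfolding H_def by blast
qed

lemma cons_err_deriv:
  fixes v :: "real^'n::finite" and f :: "real \<Rightarrow> real^'n"
  assumes "(f has_vector_derivative f') F"
  shows "((\<lambda>t. cons_err v (f t)) has_vector_derivative cons_err v f') F"
proof -
  have "bounded_linear (cons_err (v::real^'n::finite))"
    using cons_err_linear linear_conv_bounded_linear by blast
  from bounded_linear.has_vector_derivative[OF this assms] show ?thesis .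
qed

lemma cons_err_simps:
  fixes v :: "real^'n::finite"
  shows "cons_err v (x + y) = cons_err v x + cons_err v y"
    and "cons_err v (x - y) = cons_err v x - cons_err v y"
    and "cons_err v (- x) = - cons_err v x"
    and "cons_err v (c *\<^sub>R x) = c *\<^sub>R cons_err v x"
  by (simp_all add: cons_err_def algebra_simps inner_add_right inner_diff_right)

theorem proposition1:
  fixes a :: "'n::finite \<Rightarrow> 'n \<Rightarrow> real" and v :: "real^'n"
  assumes N2: "CARD('n) \<ge> 2"
    and a_nonneg: "\<And>i j. a i j \<ge> 0"
    and a_diag: "\<And>i. a i i = 0"
    and tree: "has_spanning_tree a"
    and v_left: "v v* laplacian a = 0"
    and v_norm: "v \<bullet> ones = 1"
  shows "\<exists>\<gamma>1 \<gamma>2 \<gamma>3 \<gamma>4 :: real. \<gamma>1 > 0 \<and> \<gamma>2 > 0 \<and> \<gamma>3 > 0 \<and> \<gamma>4 > 0 \<and>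
    (\<exists>\<rho> \<epsilon> \<mu> b :: real. \<exists>P :: real^'n^'n.
       \<rho> > 0 \<and> \<epsilon> > 0 \<and> \<mu> > 0 \<and> b > 0 \<and> sym_pos_def P \<and>
       sqrt (2 * \<rho> * \<mu> / onorm (\<lambda>z. P *v z)) > \<epsilon> \<and>
       (\<forall>ex ey ed :: real^'n. (ex, ey, ed) \<noteq> (0, 0, 0) \<longrightarrow>
          H_s \<rho> \<epsilon> \<mu> P ex ey + H_d b ey ed > 0) \<and>
       (\<forall>(d :: real^'n) (x :: real \<Rightarrow> real^'n) (y :: real \<Rightarrow> real^'n)
          (\<delta>h :: real \<Rightarrow> real^'n).
          (\<forall>t\<ge>0. (x has_vector_derivative y t) (at t within {0..}) \<and>
             (y has_vector_derivative
                (\<chi> i. - \<gamma>1 * (\<Sum>j\<in>UNIV. a i j * (x t $ i - x t $ j)) - \<gamma>2 * (y t $ i)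
                       - \<gamma>3 * (\<delta>h t $ i) + d $ i)) (at t within {0..}) \<and>
             (\<delta>h has_vector_derivative
                (\<chi> i. \<gamma>1 * (\<Sum>j\<in>UNIV. a i j * (x t $ i - x t $ j)) + \<gamma>4 * (y t $ i)))
                (at t within {0..}))
          \<longrightarrow>
          (let \<delta>t = (\<lambda>t. \<delta>h t - (1 / \<gamma>3) *\<^sub>R d);
               ex = (\<lambda>t. cons_err v (x t));
               ey = (\<lambda>t. cons_err v (y t));
               ed = (\<lambda>t. cons_err v (\<delta>t t))
           in (ex \<longlongrightarrow> 0) at_top \<and> (ey \<longlongrightarrow> 0) at_top \<and> (ed \<longlongrightarrow> 0) at_top \<and>
              (\<forall>t1 t2. 0 \<le> t1 \<and> t1 \<le> t2 \<longrightarrow>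
                 H_s \<rho> \<epsilon> \<mu> P (ex t2) (ey t2) + H_d b (ey t2) (ed t2)
                 \<le> H_s \<rho> \<epsilon> \<mu> P (ex t1) (ey t1) + H_d b (ey t1) (ed t1)))))"

proof -
  obtain P where Psymm: "transpose P = P" and Psym: "\<And>z w. z \<bullet> (P *v w) = w \<bullet> (P *v z)"
    and Pco: "\<And>z. z \<bullet> (P *v z) \<ge> 1/2 * (z \<bullet> z)"
    and c_ex: "\<exists>c>0. \<forall>z. v \<bullet> z = 0 \<longrightarrow> z \<bullet> (P *v (laplacian a *v z)) \<ge> c * (z \<bullet> z)"
    using lyap_exists[where a=a, OF a_diag a_nonneg tree v_left v_norm] by blast
  obtain c where c: "c > 0" and Plap: "\<And>z. v \<bullet> z = 0 \<Longrightarrow> z \<bullet> (P *v (laplacian a *v z)) \<ge> c * (z \<bullet> z)"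
    using c_ex by blast
  have spd: "sym_pos_def P"
    unfolding sym_pos_def_def
  proof (intro conjI Psymm allI impI)
    fix z :: "real^'n" assume "z \<noteq> 0"
    then have "z \<bullet> z > 0" by simp
    then show "z \<bullet> (P *v z) > 0" using Pco[of z] by linarith
  qed
  define p where "p = onorm ((*v) P)"
  have p0: "p > 0"
  proof -
    have "ones \<bullet> (P *v ones) \<ge> 1/2 * (ones \<bullet> (ones::real^'n))" by (rule Pco)
    moreover have "ones \<bullet> (ones::real^'n) > 0" by (simp add: ones_inner)
    ultimately have "P *v ones \<noteq> 0"
    proof (intro notI)
      assume "1/2 * (ones \<bullet> (ones::real^'n)) \<le> ones \<bullet> (P *v ones)" "ones \<bullet> (ones::real^'n) > 0" "P *v ones = 0"
      then show False by simp
    qed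
    then show ?thesis unfolding p_def using onorm_pos_lt[OF matrix_vector_mul_bounded_linear[of P]] by blast
  qed
  define l where "l = onorm ((*v) (laplacian a)) + 1"
  define e where "e = min (min c 1 / (4*p^2)) (1/p)"
  have e0: "e > 0" using c p0 by (simp add: e_def)
  have e1: "e * (4*p^2) \<le> c" "e * (4*p^2) \<le> 1"
  proof -
    have "e \<le> min c 1 / (4*p^2)" by (simp add: e_def)
    then have "e * (4*p^2) \<le> min c 1" using p0 by (simp add: field_simps)
    then show "e * (4*p^2) \<le> c" "e * (4*p^2) \<le> 1" by auto
  qed
  have e2: "e * p \<le> 1"
  proof -
    have "e \<le> 1/p" by (simp add: e_def)
    then show ?thesis using p0 by (simp add: field_simps)
  qed
  define G where "G = e*p + 9*l^2/(e*c) + 17"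
  have l0: "l > 0" unfolding l_def using onorm_pos_le[OF matrix_vector_mul_bounded_linear[of "laplacian a"]] by linarith
  have G1: "G \<ge> 1" unfolding G_def using e0 c l0 p0 by (simp add: add_nonneg_nonneg mult_nonneg_nonneg)
  have sq: "sqrt (2 * (e*G) * 1 / onorm (\<lambda>z. P *v z)) > e"
  proof -
    have ep: "e < 2*G/p" using e2 G1 p0 by (simp add: field_simps)
    have "e^2 < 2 * (e*G) * 1 / p"
      using ep e0 p0 by (simp add: power2_eq_square field_simps)
    then have "sqrt (e^2) < sqrt (2 * (e*G) * 1 / p)" by (rule real_sqrt_less_mono)
    then show ?thesis using e0 by (simp add: p_def)
  qed
  have Hpos: "H_s (e*G) e 1 P x y + H_d 1 y z > 0" if "(x, y, z) \<noteq> (0, 0, 0)" for x y z :: "real^'n"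
  proof -
    have lo: "H_s (e*G) e 1 P x y + H_d 1 y z \<ge> (e*G/8)*(x \<bullet> x) + 1/2*(y \<bullet> y) + 1/4*(z \<bullet> z)"
      by (rule H_lower_vec[OF Psym Pco p_def e0 e1(2) G1])
    have a1: "(e*G/8)*(x \<bullet> x) \<ge> 0" "1/2*(y \<bullet> y) \<ge> 0" "1/4*(z \<bullet> z) \<ge> 0" using e0 G1 by simp_all
    have "(e*G/8)*(x \<bullet> x) > 0 \<or> 1/2*(y \<bullet> y) > 0 \<or> 1/4*(z \<bullet> z) > 0"
      using that e0 G1 by auto
    then show ?thesis using lo a1 by linarith
  qed
  show ?thesis
  proof (rule exI[of _ 1], rule exI[of _ G], rule exI[of _ 1], rule exI[of _ G], intro conjI)
    show "(0::real) < 1" by simp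
    show "0 < G" using G1 by simp
    show "0 < G" using G1 by simp
    show "0 < (1::real)" by simp
    show "\<exists>\<rho> \<epsilon> \<mu> b :: real. \<exists>P :: real^'n^'n.
       \<rho> > 0 \<and> \<epsilon> > 0 \<and> \<mu> > 0 \<and> b > 0 \<and> sym_pos_def P \<and>
       sqrt (2 * \<rho> * \<mu> / onorm (\<lambda>z. P *v z)) > \<epsilon> \<and>
       (\<forall>ex ey ed :: real^'n. (ex, ey, ed) \<noteq> (0, 0, 0) \<longrightarrow>
          H_s \<rho> \<epsilon> \<mu> P ex ey + H_d b ey ed > 0) \<and>
       (\<forall>(d :: real^'n) (x :: real \<Rightarrow> real^'n) (y :: real \<Rightarrow> real^'n)
          (\<delta>h :: real \<Rightarrow> real^'n).
          (\<forall>t\<ge>0. (x has_vector_derivative y t) (at t within {0..}) \<and>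
             (y has_vector_derivative
                (\<chi> i. - 1 * (\<Sum>j\<in>UNIV. a i j * (x t $ i - x t $ j)) - G * (y t $ i)
                       - 1 * (\<delta>h t $ i) + d $ i)) (at t within {0..}) \<and>
             (\<delta>h has_vector_derivative
                (\<chi> i. 1 * (\<Sum>j\<in>UNIV. a i j * (x t $ i - x t $ j)) + G * (y t $ i)))
                (at t within {0..}))
          \<longrightarrow>
          (let \<delta>t = (\<lambda>t. \<delta>h t - (1 / 1) *\<^sub>R d);
               ex = (\<lambda>t. cons_err v (x t));
               ey = (\<lambda>t. cons_err v (y t));
               ed = (\<lambda>t. cons_err v (\<delta>t t))
           in (ex \<longlongrightarrow> 0) at_top \<and> (ey \<longlongrightarrow> 0) at_top \<and> (ed \<longlongrightarrow> 0) at_top \<and>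
              (\<forall>t1 t2. 0 \<le> t1 \<and> t1 \<le> t2 \<longrightarrow>
                 H_s \<rho> \<epsilon> \<mu> P (ex t2) (ey t2) + H_d b (ey t2) (ed t2)
                 \<le> H_s \<rho> \<epsilon> \<mu> P (ex t1) (ey t1) + H_d b (ey t1) (ed t1))))"
    proof (rule exI[of _ "e*G"], rule exI[of _ e], rule exI[of _ 1], rule exI[of _ 1], rule exI[of _ P], intro conjI allI impI)
      show "0 < e*G" using e0 G1 by simp
      show "0 < e" by (rule e0)
      show "(0::real) < 1" "(0::real) < 1" by simp_all
      show "sym_pos_def P" by (rule spd)
      show "sqrt (2 * (e*G) * 1 / onorm (\<lambda>z. P *v z)) > e" by (rule sq)
      show "H_s (e*G) e 1 P x y + H_d 1 y z > 0" if "(x, y, z) \<noteq> (0, 0, 0)" for x y z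
        using Hpos[OF that] .
    next
      fix d :: "real^'n" and x y \<delta>h :: "real \<Rightarrow> real^'n"
      assume hyp: "\<forall>t\<ge>0. (x has_vector_derivative y t) (at t within {0..}) \<and>
             (y has_vector_derivative
                (\<chi> i. - 1 * (\<Sum>j\<in>UNIV. a i j * (x t $ i - x t $ j)) - G * (y t $ i)
                       - 1 * (\<delta>h t $ i) + d $ i)) (at t within {0..}) \<and>
             (\<delta>h has_vector_derivative
                (\<chi> i. 1 * (\<Sum>j\<in>UNIV. a i j * (x t $ i - x t $ j)) + G * (y t $ i)))
                (at t within {0..})"
      define L where "L = laplacian a"
      define ex where "ex t = cons_err v (x t)" for t
      define ey where "ey t = cons_err v (y t)" for t
      define ed where "ed t = cons_err v (\<delta>h t - (1/1) *\<^sub>R d)" for t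
      have Lce: "cons_err v (L *v z) = L *v cons_err v z" for z
      proof -
        have "v \<bullet> (L *v z) = 0" using v_left unfolding L_def by (metis dot_lmul_matrix inner_zero_left)
        moreover have "L *v ones = 0" unfolding L_def by (rule lap_ones[OF a_diag a_nonneg])
        ultimately show ?thesis
          by (simp add: cons_err_def matrix_vector_mult_diff_distrib matrix_vector_mult_scaleR)
      qed
      have vS: "v \<bullet> cons_err v z = 0" for z using v_norm by (simp add: cons_err_def inner_diff_right)
      have lapc: "(\<Sum>j\<in>UNIV. a i j * (z $ i - z $ j)) = (L *v z) $ i" for z i
        unfolding L_def by (rule lap_comp[OF a_diag a_nonneg, symmetric])
      have der: "(ex has_vector_derivative ey t) (at t within {0..}) \<and>
        (ey has_vector_derivative (- (L *v ex t) - G *\<^sub>R ey t - ed t)) (at t within {0..}) \<and>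
        (ed has_vector_derivative (L *v ex t + G *\<^sub>R ey t)) (at t within {0..})" if t: "t \<ge> 0" for t
      proof -
        note ht = hyp[rule_format, OF t]
        have h1: "(x has_vector_derivative y t) (at t within {0..})" using conjunct1[OF ht] .
        have e2: "(\<chi> i. - 1 * (\<Sum>j\<in>UNIV. a i j * (x t $ i - x t $ j)) - G * (y t $ i)
                       - 1 * (\<delta>h t $ i) + d $ i) = - (L *v x t) - G *\<^sub>R y t - (\<delta>h t - (1/1) *\<^sub>R d)"
          by (simp add: vec_eq_iff lapc)
        have h2: "(y has_vector_derivative (- (L *v x t) - G *\<^sub>R y t - (\<delta>h t - (1/1) *\<^sub>R d))) (at t within {0..})"
          using conjunct1[OF conjunct2[OF ht]] unfolding e2 .
        have e3: "(\<chi> i. 1 * (\<Sum>j\<in>UNIV. a i j * (x t $ i - x t $ j)) + G * (y t $ i)) = L *v x t + G *\<^sub>R y t"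
          by (simp add: vec_eq_iff lapc)
        have h3: "(\<delta>h has_vector_derivative (L *v x t + G *\<^sub>R y t)) (at t within {0..})"
          using conjunct2[OF conjunct2[OF ht]] unfolding e3 .
        have h3': "((\<lambda>s. \<delta>h s - (1/1) *\<^sub>R d) has_vector_derivative (L *v x t + G *\<^sub>R y t)) (at t within {0..})"
          using h3 by (simp add: has_vector_derivative_diff_const)
        show ?thesis
          using cons_err_deriv[OF h1, of v] cons_err_deriv[OF h2, of v] cons_err_deriv[OF h3', of v]
          by (simp add: ex_def[abs_def] ey_def[abs_def] ed_def[abs_def] cons_err_simps Lce)
      qed
      have res: "(ex \<longlongrightarrow> 0) at_top \<and> (ey \<longlongrightarrow> 0) at_top \<and> (ed \<longlongrightarrow> 0) at_top \<and>
        (\<forall>t1 t2. 0 \<le> t1 \<and> t1 \<le> t2 \<longrightarrow>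
            H_s (e*G) e 1 P (ex t2) (ey t2) + H_d 1 (ey t2) (ed t2)
            \<le> H_s (e*G) e 1 P (ex t1) (ey t1) + H_d 1 (ey t1) (ed t1))"
        by (rule ode_main[where v=v, OF Psym Pco c Plap[unfolded L_def[symmetric]] p_def p0 l_def[unfolded L_def[symmetric]] e0 e1 e2 G_def der])
          (assumption, assumption, unfold ex_def, rule vS)
      show "let \<delta>t = (\<lambda>t. \<delta>h t - (1 / 1) *\<^sub>R d);
               ex = (\<lambda>t. cons_err v (x t));
               ey = (\<lambda>t. cons_err v (y t));
               ed = (\<lambda>t. cons_err v (\<delta>t t))
           in (ex \<longlongrightarrow> 0) at_top \<and> (ey \<longlongrightarrow> 0) at_top \<and> (ed \<longlongrightarrow> 0) at_top \<and>
              (\<forall>t1 t2. 0 \<le> t1 \<and> t1 \<le> t2 \<longrightarrow>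
                 H_s (e*G) e 1 P (ex t2) (ey t2) + H_d 1 (ey t2) (ed t2)
                 \<le> H_s (e*G) e 1 P (ex t1) (ey t1) + H_d 1 (ey t1) (ed t1))"
        using res unfolding Let_def ex_def[abs_def] ey_def[abs_def] ed_def[abs_def] by simp
    qed
  qed
qed

end
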